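(* Let $\theta$ be a comtrace alphabet. For all $T_1,T_2\in\mathsf{LCT}(\theta)$, the composition $T_1\odot T_2$ is an lsos-comtrace over $\theta$, i.e. $T_1\odot T_2\in\mathsf{LCT}(\theta)$.
   Context: So-structures: $(X,\prec,\sqsubset)$ with (S1) $\neg(\alpha\sqsubset\alpha)$; (S2) $\alpha\prec\beta\Rightarrow\alpha\sqsubset\beta$; (S3) $\alpha\sqsubset\beta\sqsubset\gamma\wedge\alpha\neq\gamma\Rightarrow\alpha\sqsubset\gamma$; (S4) $(\alpha\sqsubset\beta\prec\gamma)\vee(\alpha\prec\beta\sqsubset\gamma)\Rightarrow\alpha\prec\gamma$. Quotient: $\alpha\equiv_\sqsubset\beta$ iff $\alpha=\beta$ or ($\alpha\sqsubset\beta\wedge\beta\sqsubset\alpha$); classes $[\alpha]$; $[\alpha]\hat\prec[\beta]$ iff $[\alpha]\neq[\beta]$ and $([\alpha]\times[\beta])\cap\prec\neq\emptyset$; $\hat\sqsubset$ likewise. $R^{\mathrm{cov}}:=\{(x,y):xRy\wedge\neg\exists z(xRz\wedge zRy)\}$. $\lozenge$-closure: $(X,R_1,R_2)^\lozenge:=(X,(R_1\cup R_2)^*\circ R_1\circ(R_1\cup R_2)^*,(R_1\cup R_2)^*\setminus\mathrm{id}_X)$. Labeled structures are taken up to label-preserving isomorphism (bijections preserving/reflecting both relations and preserving labels); $[\cdot]$ denotes the class. Comtrace alphabet: $\theta=(E,sim,ser)$, $E$ finite, $ser\subseteq sim\subseteq E\times E$, $sim$ irreflexive symmetric. Lsos-comtrace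 over $\theta$: the class of a finite labeled so-structure $(X,\prec,\sqsubset,\lambda)$, $\lambda:X\to E$, such that for all $\alpha\neq\beta$: (LC1) $[\alpha]((\hat\sqsubset)^{\mathrm{cov}}\cap\hat\prec)[\beta]\Rightarrow\lambda[[\alpha]]\times\lambda[[\beta]]\not\subseteq ser$; (LC2) $[\alpha]((\hat\sqsubset)^{\mathrm{cov}}\setminus\hat\prec)[\beta]\Rightarrow\lambda[[\beta]]\times\lambda[[\alpha]]\not\subseteq ser$; (LC3) for nonempty $A,B\subseteq[\alpha]$ with $A\cup B=[\alpha]$, $\lambda[A]\times\lambda[B]\not\subseteq ser$; (LC4) $(\lambda\alpha,\lambda\beta)\notin ser\Rightarrow\alpha\prec\beta\vee\beta\sqsubset\alpha$; (LC5) $(\lambda\alpha,\lambda\beta)\notin sim\Rightarrow\alpha\prec\beta\vee\beta\prec\alpha$. $\mathsf{LCT}(\theta)$ is the set of these. Composition: for $T_i=[X_i,\prec_i,\sqsubset_i,\lambda_i]$ ($i=1,2$), with $X_1,X_2$ made disjoint, $T_1\odot T_2:=[X,\prec,\sqsubset,\lambda]$ where $X=X_1\uplus X_2$, $\lambda=\lambda_1\uplus\lambda_2$, $(X,\prec,\sqsubset)=(X,\prec_{\langle1,2\rangle},\sqsubset_{\langle1,2\rangle})^\lozenge$ with $\prec_{\langle1,2\rangle}=\prec_1\cup\prec_2\cup\{(\alpha,\beta)\in X_1\times X_2:(\lambda\alpha,\lambda\beta)\notin ser\}$ and $\sqsubset_{\langle1,2\rangle}=\sqsubset_1\cup\sqsubset_2\cup\{(\alpha,\beta)\in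 X_1\times X_2:(\lambda\beta,\lambda\alpha)\notin ser\}$. *)

theory Defs
  imports Main
begin

definition so_structure :: "'x set \<Rightarrow> 'x rel \<Rightarrow> 'x rel \<Rightarrow> bool" where
  "so_structure X P S \<longleftrightarrow>
     P \<subseteq> X \<times> X \<and> S \<subseteq> X \<times> X \<and>
     (\<forall>a\<in>X. (a, a) \<notin> S) \<and>
     (\<forall>a\<in>X. \<forall>b\<in>X. (a, b) \<in> P \<longrightarrow> (a, b) \<in> S) \<and>
     (\<forall>a\<in>X. \<forall>b\<in>X. \<forall>c\<in>X. (a, b) \<in> S \<and> (b, c) \<in> S \<and> a \<noteq> c \<longrightarrow> (a, c) \<in> S) \<and>
     (\<forall>a\<in>X. \<forall>b\<in>X. \<forall>c\<in>X.
        ((a, b) \<in> S \<and> (b, c) \<in> P) \<or> ((a, b) \<in> P \<and> (b, c) \<in> S) \<longrightarrow> (a, c) \<in> P)"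

definition sq_eqv :: "'x rel \<Rightarrow> 'x \<Rightarrow> 'x \<Rightarrow> bool" where
  "sq_eqv S a b \<longleftrightarrow> a = b \<or> ((a, b) \<in> S \<and> (b, a) \<in> S)"

definition sq_cls :: "'x set \<Rightarrow> 'x rel \<Rightarrow> 'x \<Rightarrow> 'x set" where
  "sq_cls X S a = {b \<in> X. sq_eqv S a b}"

definition hat :: "'x set \<Rightarrow> 'x rel \<Rightarrow> 'x rel \<Rightarrow> ('x set) rel" where
  "hat X S R = {(sq_cls X S a, sq_cls X S b) | a b.
      a \<in> X \<and> b \<in> X \<and> sq_cls X S a \<noteq> sq_cls X S b \<and>
      (sq_cls X S a \<times> sq_cls X S b) \<inter> R \<noteq> {}}"

definition cov :: "'a rel \<Rightarrow> 'a rel" where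
  "cov R = {(x, y). (x, y) \<in> R \<and> \<not> (\<exists>z. (x, z) \<in> R \<and> (z, y) \<in> R)}"

definition diamond :: "'x rel \<Rightarrow> 'x rel \<Rightarrow> 'x rel \<times> 'x rel" where
  "diamond R1 R2 = ((R1 \<union> R2)\<^sup>* O R1 O (R1 \<union> R2)\<^sup>*, (R1 \<union> R2)\<^sup>* - Id)"

definition comtrace_alphabet :: "'e set \<Rightarrow> 'e rel \<Rightarrow> 'e rel \<Rightarrow> bool" where
  "comtrace_alphabet E sim ser \<longleftrightarrow>
     finite E \<and> ser \<subseteq> sim \<and> sim \<subseteq> E \<times> E \<and> irrefl sim \<and> sym sim"

text \<open>A labeled so-structure (X, \<prec>, \<sqsubset>, \<lambda>).\<close>
type_synonym ('x, 'e) lsos = "'x set \<times> 'x rel \<times> 'x rel \<times> ('x \<Rightarrow> 'e)"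

text \<open>Membership of the
  isomorphism class in LCT(\<theta>) means that (any, equivalently every)
  representative satisfies this predicate.\<close>
definition lsos_comtrace :: "'e set \<Rightarrow> 'e rel \<Rightarrow> 'e rel \<Rightarrow> ('x, 'e) lsos \<Rightarrow> bool" where
  "lsos_comtrace E sim ser T \<longleftrightarrow>
     (case T of (X, P, S, lam) \<Rightarrow>
       finite X \<and> so_structure X P S \<and> lam ` X \<subseteq> E \<and>
       (\<forall>a\<in>X. \<forall>b\<in>X. a \<noteq> b \<longrightarrow>
          (sq_cls X S a, sq_cls X S b) \<in> cov (hat X S S) \<inter> hat X S P \<longrightarrow>
          \<not> (lam ` sq_cls X S a \<times> lam ` sq_cls X S b \<subseteq> ser)) \<and>
       (\<forall>a\<in>X. \<forall>b\<in>X. a \<noteq> b \<longrightarrow>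
          (sq_cls X S a, sq_cls X S b) \<in> cov (hat X S S) - hat X S P \<longrightarrow>
          \<not> (lam ` sq_cls X S b \<times> lam ` sq_cls X S a \<subseteq> ser)) \<and>
       (\<forall>a\<in>X. \<forall>A B. A \<noteq> {} \<and> B \<noteq> {} \<and> A \<subseteq> sq_cls X S a \<and> B \<subseteq> sq_cls X S a \<and>
          A \<union> B = sq_cls X S a \<longrightarrow> \<not> (lam ` A \<times> lam ` B \<subseteq> ser)) \<and>
       (\<forall>a\<in>X. \<forall>b\<in>X. a \<noteq> b \<longrightarrow> (lam a, lam b) \<notin> ser \<longrightarrow>
          (a, b) \<in> P \<or> (b, a) \<in> S) \<and>
       (\<forall>a\<in>X. \<forall>b\<in>X. a \<noteq> b \<longrightarrow> (lam a, lam b) \<notin> sim \<longrightarrow>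
          (a, b) \<in> P \<or> (b, a) \<in> P))"

text \<open>Composition of representatives; the carriers are made disjoint via the
  sum type (Inl for the first, Inr for the second).\<close>
definition comtrace_comp :: "'e rel \<Rightarrow> ('x, 'e) lsos \<Rightarrow> ('y, 'e) lsos \<Rightarrow> ('x + 'y, 'e) lsos" where
  "comtrace_comp ser T1 T2 =
     (case T1 of (X1, P1, S1, l1) \<Rightarrow> case T2 of (X2, P2, S2, l2) \<Rightarrow>
       let X = Inl ` X1 \<union> Inr ` X2;
           lam = case_sum l1 l2;
           P12 = map_prod Inl Inl ` P1 \<union> map_prod Inr Inr ` P2 \<union>
                 {(Inl a, Inr b) | a b. a \<in> X1 \<and> b \<in> X2 \<and> (l1 a, l2 b) \<notin> ser};
           S12 = map_prod Inl Inl ` S1 \<union> map_prod Inr Inr ` S2 \<union>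
                 {(Inl a, Inr b) | a b. a \<in> X1 \<and> b \<in> X2 \<and> (l2 b, l1 a) \<notin> ser}
       in (X, fst (diamond P12 S12), snd (diamond P12 S12), lam))"

end

theory Submission
  imports Defs
begin

lemma soD:
  assumes "so_structure X P S"
  shows "P \<subseteq> X \<times> X" "S \<subseteq> X \<times> X" "\<And>a. a\<in>X \<Longrightarrow> (a, a) \<notin> S"
    "\<And>a b. a\<in>X \<Longrightarrow> b\<in>X \<Longrightarrow> (a, b) \<in> P \<Longrightarrow> (a, b) \<in> S"
    "\<And>a b c. a\<in>X \<Longrightarrow> b\<in>X \<Longrightarrow> c\<in>X \<Longrightarrow> (a, b) \<in> S \<Longrightarrow> (b, c) \<in> S \<Longrightarrow> a \<noteq> c \<Longrightarrow> (a, c) \<in> S"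
    "\<And>a b c. a\<in>X \<Longrightarrow> b\<in>X \<Longrightarrow> c\<in>X \<Longrightarrow> (a, b) \<in> S \<Longrightarrow> (b, c) \<in> P \<Longrightarrow> (a, c) \<in> P"
    "\<And>a b c. a\<in>X \<Longrightarrow> b\<in>X \<Longrightarrow> c\<in>X \<Longrightarrow> (a, b) \<in> P \<Longrightarrow> (b, c) \<in> S \<Longrightarrow> (a, c) \<in> P"
  using assms unfolding so_structure_def by blast+

lemma sq_eqv_cls:
  assumes so: "so_structure X P S" and "x \<in> sq_cls X S a" "y \<in> sq_cls X S a"
  shows "sq_eqv S x y"
proof -
  note SX = soD(2)[OF so] and S3 = soD(5)[OF so]
  from assms(2,3) have x: "x \<in> X" "a = x \<or> ((a,x) \<in> S \<and> (x,a) \<in> S)"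
    and y: "y \<in> X" "a = y \<or> ((a,y) \<in> S \<and> (y,a) \<in> S)"
    by (auto simp: sq_cls_def sq_eqv_def)
  show ?thesis
  proof (cases "x = y")
    case True then show ?thesis by (simp add: sq_eqv_def)
  next
    case False
    show ?thesis
    proof (cases "a = x")
      case True then show ?thesis using y by (auto simp: sq_eqv_def)
    next
      case ax: False
      show ?thesis
      proof (cases "a = y")
        case True then show ?thesis using x by (auto simp: sq_eqv_def)
      next
        case False
        with ax x y have "a \<in> X" using SX by auto
        then have "(x,y) \<in> S" "(y,x) \<in> S" using x y ax False \<open>x \<noteq> y\<close> S3 by blast+
        then show ?thesis unfolding sq_eqv_def by simp
      qed
    qed
  qed
qed

lemma cls_notP:
  assumes so: "so_structure X P S" and "x \<in> sq_cls X S a" "y \<in> sq_cls X S a"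
  shows "(x, y) \<notin> P"
proof
  assume xy: "(x, y) \<in> P"
  have e: "sq_eqv S x y" using sq_eqv_cls[OF assms] .
  have x: "x \<in> X" "y \<in> X" using assms(2,3) by (auto simp: sq_cls_def)
  have irr: "(x,x) \<notin> S" using soD(3)[OF so x(1)] .
  note PS = soD(4)[OF so] and S4 = soD(7)[OF so]
  have "(x,x) \<in> P"
  proof (cases "x = y")
    case True then show ?thesis using xy by simp
  next
    case False
    then have "(y,x) \<in> S" using e by (simp add: sq_eqv_def)
    then show ?thesis using S4[OF x(1) x(2) x(1) xy] by simp
  qed
  then show False using PS[OF x(1) x(1)] irr by simp
qed

lemma hat_iff:
  assumes "a \<in> X" "b \<in> X"
  shows "(sq_cls X S a, sq_cls X S b) \<in> hat X S R \<longleftrightarrow>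
    sq_cls X S a \<noteq> sq_cls X S b \<and> (\<exists>x\<in>sq_cls X S a. \<exists>y\<in>sq_cls X S b. (x, y) \<in> R)"
  using assms unfolding hat_def by auto

lemma hat_dom1: "(A, Z) \<in> hat X S R \<Longrightarrow> \<exists>z\<in>X. Z = sq_cls X S z"
  unfolding hat_def by auto

lemma hat_dom2: "(Z, A) \<in> hat X S R \<Longrightarrow> \<exists>z\<in>X. Z = sq_cls X S z"
  unfolding hat_def by auto

lemma cls_self: "x \<in> X \<Longrightarrow> x \<in> sq_cls X S x"
  by (simp add: sq_cls_def sq_eqv_def)

lemma path_cross:
  assumes "(x, y) \<in> R\<^sup>*" "x \<in> A" "y \<notin> A"
    "\<forall>z. (x, z) \<in> R\<^sup>* \<longrightarrow> (z, y) \<in> R\<^sup>* \<longrightarrow> z \<in> A \<union> B"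
  shows "\<exists>u\<in>A. \<exists>v\<in>B. (u, v) \<in> R"
  using assms
proof (induction rule: rtrancl_induct)
  case base then show ?case by simp
next
  case (step y' y)
  note all = step.prems(3)
  show ?case
  proof (cases "y' \<in> A")
    case True
    have "y \<in> A \<union> B" using all step.hyps(1,2) by (meson rtrancl.rtrancl_into_rtrancl rtrancl.rtrancl_refl)
    then have "y \<in> B" using step.prems(2) by simp
    then show ?thesis using True step.hyps(2) by blast
  next
    case False
    have "\<forall>z. (x, z) \<in> R\<^sup>* \<longrightarrow> (z, y') \<in> R\<^sup>* \<longrightarrow> z \<in> A \<union> B"
    proof (intro allI impI)
      fix z assume "(x, z) \<in> R\<^sup>*" "(z, y') \<in> R\<^sup>*"
      then show "z \<in> A \<union> B" using all step.hyps(2) by (meson rtrancl.rtrancl_into_rtrancl)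
    qed
    then show ?thesis using step.IH step.prems(1) False by blast
  qed
qed


locale cc =
  fixes E :: "'e set" and sim ser :: "'e rel"
    and X1 :: "'x set" and P1 S1 :: "'x rel" and l1 :: "'x \<Rightarrow> 'e"
    and X2 :: "'y set" and P2 S2 :: "'y rel" and l2 :: "'y \<Rightarrow> 'e"
  assumes alph: "comtrace_alphabet E sim ser"
    and T1: "lsos_comtrace E sim ser (X1, P1, S1, l1)"
    and T2: "lsos_comtrace E sim ser (X2, P2, S2, l2)"
begin

definition "X = Inl ` X1 \<union> Inr ` X2"
definition "lam = case_sum l1 l2"
definition "P12 = map_prod Inl Inl ` P1 \<union> map_prod Inr Inr ` P2 \<union>
                 {(Inl a, Inr b) | a b. a \<in> X1 \<and> b \<in> X2 \<and> (l1 a, l2 b) \<notin> ser}"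
definition "S12 = map_prod Inl Inl ` S1 \<union> map_prod Inr Inr ` S2 \<union>
                 {(Inl a, Inr b) | a b. a \<in> X1 \<and> b \<in> X2 \<and> (l2 b, l1 a) \<notin> ser}"
definition "R = P12 \<union> S12"
definition "P = R\<^sup>* O P12 O R\<^sup>*"
definition "S = R\<^sup>* - Id"

lemma T1D: "finite X1" "so_structure X1 P1 S1" "l1 ` X1 \<subseteq> E"
  "\<forall>a\<in>X1. \<forall>b\<in>X1. a \<noteq> b \<longrightarrow>
          (sq_cls X1 S1 a, sq_cls X1 S1 b) \<in> cov (hat X1 S1 S1) \<inter> hat X1 S1 P1 \<longrightarrow>
          \<not> (l1 ` sq_cls X1 S1 a \<times> l1 ` sq_cls X1 S1 b \<subseteq> ser)"
  "\<forall>a\<in>X1. \<forall>b\<in>X1. a \<noteq> b \<longrightarrow>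
          (sq_cls X1 S1 a, sq_cls X1 S1 b) \<in> cov (hat X1 S1 S1) - hat X1 S1 P1 \<longrightarrow>
          \<not> (l1 ` sq_cls X1 S1 b \<times> l1 ` sq_cls X1 S1 a \<subseteq> ser)"
  "\<forall>a\<in>X1. \<forall>A B. A \<noteq> {} \<and> B \<noteq> {} \<and> A \<subseteq> sq_cls X1 S1 a \<and> B \<subseteq> sq_cls X1 S1 a \<and>
          A \<union> B = sq_cls X1 S1 a \<longrightarrow> \<not> (l1 ` A \<times> l1 ` B \<subseteq> ser)"
  "\<forall>a\<in>X1. \<forall>b\<in>X1. a \<noteq> b \<longrightarrow> (l1 a, l1 b) \<notin> ser \<longrightarrow> (a, b) \<in> P1 \<or> (b, a) \<in> S1"
  "\<forall>a\<in>X1. \<forall>b\<in>X1. a \<noteq> b \<longrightarrow> (l1 a, l1 b) \<notin> sim \<longrightarrow> (a, b) \<in> P1 \<or> (b, a) \<in> P1"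
  using T1 unfolding lsos_comtrace_def by simp_all

lemma T2D: "finite X2" "so_structure X2 P2 S2" "l2 ` X2 \<subseteq> E"
  "\<forall>a\<in>X2. \<forall>b\<in>X2. a \<noteq> b \<longrightarrow>
          (sq_cls X2 S2 a, sq_cls X2 S2 b) \<in> cov (hat X2 S2 S2) \<inter> hat X2 S2 P2 \<longrightarrow>
          \<not> (l2 ` sq_cls X2 S2 a \<times> l2 ` sq_cls X2 S2 b \<subseteq> ser)"
  "\<forall>a\<in>X2. \<forall>b\<in>X2. a \<noteq> b \<longrightarrow>
          (sq_cls X2 S2 a, sq_cls X2 S2 b) \<in> cov (hat X2 S2 S2) - hat X2 S2 P2 \<longrightarrow>
          \<not> (l2 ` sq_cls X2 S2 b \<times> l2 ` sq_cls X2 S2 a \<subseteq> ser)"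
  "\<forall>a\<in>X2. \<forall>A B. A \<noteq> {} \<and> B \<noteq> {} \<and> A \<subseteq> sq_cls X2 S2 a \<and> B \<subseteq> sq_cls X2 S2 a \<and>
          A \<union> B = sq_cls X2 S2 a \<longrightarrow> \<not> (l2 ` A \<times> l2 ` B \<subseteq> ser)"
  "\<forall>a\<in>X2. \<forall>b\<in>X2. a \<noteq> b \<longrightarrow> (l2 a, l2 b) \<notin> ser \<longrightarrow> (a, b) \<in> P2 \<or> (b, a) \<in> S2"
  "\<forall>a\<in>X2. \<forall>b\<in>X2. a \<noteq> b \<longrightarrow> (l2 a, l2 b) \<notin> sim \<longrightarrow> (a, b) \<in> P2 \<or> (b, a) \<in> P2"
  using T2 unfolding lsos_comtrace_def by simp_all

lemmas so1 = soD[OF T1D(2)] and so2 = soD[OF T2D(2)]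

lemma R_cases:
  assumes "(v, w) \<in> R"
  obtains (L) c d where "v = Inl c" "w = Inl d" "(c, d) \<in> S1"
    | (Rt) c d where "v = Inr c" "w = Inr d" "(c, d) \<in> S2"
    | (X) c d where "v = Inl c" "w = Inr d" "c \<in> X1" "d \<in> X2"
proof -
  have P1S: "(c, d) \<in> S1" if "(c, d) \<in> P1" for c d
    using so1(1,4) that by blast
  have P2S: "(c, d) \<in> S2" if "(c, d) \<in> P2" for c d
    using so2(1,4) that by blast
  show ?thesis using assms P1S P2S that unfolding R_def P12_def S12_def by blast
qed

lemma R_X: "R \<subseteq> X \<times> X"
proof
  fix p assume "p \<in> R"
  then obtain v w where p: "p = (v, w)" "(v, w) \<in> R" by (cases p) auto
  from p(2) show "p \<in> X \<times> X"
    by (cases rule: R_cases) (use p so1(2) so2(2) in \<open>auto simp: X_def\<close>)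
qed

definition "Q u v \<longleftrightarrow> (\<forall>a b. u = Inl a \<longrightarrow> v = Inl b \<longrightarrow> a = b \<or> (a, b) \<in> S1) \<and>
   (\<forall>a b. u = Inr a \<longrightarrow> v = Inr b \<longrightarrow> a = b \<or> (a, b) \<in> S2) \<and>
   (\<forall>a b. \<not> (u = Inr a \<and> v = Inl b))"

lemma reach: "(u, v) \<in> R\<^sup>* \<Longrightarrow> Q u v"
proof (induction rule: rtrancl_induct)
  case base then show ?case by (auto simp: Q_def)
next
  case (step v w)
  from step.hyps(2) show ?case
  proof (cases rule: R_cases)
    case (L c d)
    have X1: "c \<in> X1" "d \<in> X1" using L so1(2) by auto
    show ?thesis unfolding Q_def
    proof (intro conjI allI impI)
      fix a b assume "u = Inl a" "w = Inl b"
      then have "a = c \<or> (a, c) \<in> S1" "b = d" using step.IH L unfolding Q_def by auto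
      then show "a = b \<or> (a, b) \<in> S1"
        using L X1 so1(2,5) by blast
    next
      fix a b show "\<not> (u = Inr a \<and> w = Inl b)" using step.IH L unfolding Q_def by auto
    qed (use L in auto)
  next
    case (Rt c d)
    have X2: "c \<in> X2" "d \<in> X2" using Rt so2(2) by auto
    show ?thesis unfolding Q_def
    proof (intro conjI allI impI)
      fix a b assume "u = Inr a" "w = Inr b"
      then have "a = c \<or> (a, c) \<in> S2" "b = d" using step.IH Rt unfolding Q_def by auto
      then show "a = b \<or> (a, b) \<in> S2"
        using Rt X2 so2(2,5) by blast
    qed (use Rt in auto)
  next
    case (X c d)
    show ?thesis unfolding Q_def
    proof (intro conjI allI impI)
      fix a b assume "u = Inr a" "w = Inr b"
      then show "a = b \<or> (a, b) \<in> S2" using step.IH X unfolding Q_def by auto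
    qed (use X in auto)
  qed
qed

lemma reach_LL: "(Inl a, Inl b) \<in> R\<^sup>* \<Longrightarrow> a = b \<or> (a, b) \<in> S1"
  using reach unfolding Q_def by blast
lemma reach_RR: "(Inr a, Inr b) \<in> R\<^sup>* \<Longrightarrow> a = b \<or> (a, b) \<in> S2"
  using reach unfolding Q_def by blast
lemma reach_RL: "(Inr a, Inl b) \<notin> R\<^sup>*"
  using reach unfolding Q_def by blast

lemma S_LL: "(Inl a, Inl b) \<in> S \<longleftrightarrow> (a, b) \<in> S1"
proof
  assume "(Inl a, Inl b) \<in> S" then show "(a, b) \<in> S1" using reach_LL unfolding S_def by auto
next
  assume h: "(a, b) \<in> S1"
  then have "(Inl a, Inl b) \<in> R" unfolding R_def S12_def by auto
  moreover have "a \<noteq> b" using h so1(2,3) by auto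
  ultimately show "(Inl a, Inl b) \<in> S" unfolding S_def by auto
qed

lemma S_RR: "(Inr a, Inr b) \<in> S \<longleftrightarrow> (a, b) \<in> S2"
proof
  assume "(Inr a, Inr b) \<in> S" then show "(a, b) \<in> S2" using reach_RR unfolding S_def by auto
next
  assume h: "(a, b) \<in> S2"
  then have "(Inr a, Inr b) \<in> R" unfolding R_def S12_def by auto
  moreover have "a \<noteq> b" using h so2(2,3) by auto
  ultimately show "(Inr a, Inr b) \<in> S" unfolding S_def by auto
qed

lemma S_RL: "(Inr a, Inl b) \<notin> S"
  using reach_RL unfolding S_def by auto

lemma P12_sub_P: "P12 \<subseteq> P" unfolding P_def by auto
lemma P_sub_R: "P \<subseteq> R\<^sup>*"
proof
  fix p assume "p \<in> P"
  then obtain x w w' y where p: "p = (x, y)" "(x, w) \<in> R\<^sup>*" "(w, w') \<in> P12" "(w', y) \<in> R\<^sup>*"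
    unfolding P_def by blast
  have "(w, w') \<in> R\<^sup>*" using p(3) unfolding R_def by auto
  then show "p \<in> R\<^sup>*" using p by (meson rtrancl_trans)
qed


lemma P12_cases:
  assumes "(v, w) \<in> P12"
  obtains (L) c d where "v = Inl c" "w = Inl d" "(c, d) \<in> P1"
    | (Rt) c d where "v = Inr c" "w = Inr d" "(c, d) \<in> P2"
    | (X) c d where "v = Inl c" "w = Inr d" "c \<in> X1" "d \<in> X2" "(l1 c, l2 d) \<notin> ser"
  using assms that unfolding P12_def by blast

lemma P_LL: "(Inl a, Inl b) \<in> P \<longleftrightarrow> (a, b) \<in> P1"
proof
  assume "(Inl a, Inl b) \<in> P"
  then obtain w w' where w: "(Inl a, w) \<in> R\<^sup>*" "(w, w') \<in> P12" "(w', Inl b) \<in> R\<^sup>*"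
    unfolding P_def by blast
  from w(2) show "(a, b) \<in> P1"
  proof (cases rule: P12_cases)
    case (L c d)
    have X: "c \<in> X1" "d \<in> X1" using L so1(1) by auto
    have ac: "a = c \<or> (a, c) \<in> S1" using reach_LL w(1) L by simp
    have db: "d = b \<or> (d, b) \<in> S1" using reach_LL w(3) L by simp
    have a: "a \<in> X1" using ac X so1(2) by auto
    have b: "b \<in> X1" using db X so1(2) by auto
    have "(a, d) \<in> P1" using ac L(3) so1(6)[OF a X(1) X(2)] by auto
    then show ?thesis using db so1(7)[OF a X(2) b] by auto
  next
    case (Rt c d) then show ?thesis using reach_RL w(3) by simp
  next
    case (X c d) then show ?thesis using reach_RL w(3) by simp
  qed
next
  assume "(a, b) \<in> P1"
  then have "(Inl a, Inl b) \<in> P12" unfolding P12_def by auto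
  then show "(Inl a, Inl b) \<in> P" using P12_sub_P by auto
qed

lemma P_RR: "(Inr a, Inr b) \<in> P \<longleftrightarrow> (a, b) \<in> P2"
proof
  assume "(Inr a, Inr b) \<in> P"
  then obtain w w' where w: "(Inr a, w) \<in> R\<^sup>*" "(w, w') \<in> P12" "(w', Inr b) \<in> R\<^sup>*"
    unfolding P_def by blast
  from w(2) show "(a, b) \<in> P2"
  proof (cases rule: P12_cases)
    case (Rt c d)
    have X: "c \<in> X2" "d \<in> X2" using Rt so2(1) by auto
    have ac: "a = c \<or> (a, c) \<in> S2" using reach_RR w(1) Rt by simp
    have db: "d = b \<or> (d, b) \<in> S2" using reach_RR w(3) Rt by simp
    have a: "a \<in> X2" using ac X so2(2) by auto
    have b: "b \<in> X2" using db X so2(2) by auto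
    have "(a, d) \<in> P2" using ac Rt(3) so2(6)[OF a X(1) X(2)] by auto
    then show ?thesis using db so2(7)[OF a X(2) b] by auto
  next
    case (L c d) then show ?thesis using reach_RL w(1) by simp
  next
    case (X c d) then show ?thesis using reach_RL w(1) by simp
  qed
next
  assume "(a, b) \<in> P2"
  then have "(Inr a, Inr b) \<in> P12" unfolding P12_def by auto
  then show "(Inr a, Inr b) \<in> P" using P12_sub_P by auto
qed

lemma P_RL: "(Inr a, Inl b) \<notin> P"
  using P_sub_R reach_RL by blast

lemma P_irrefl: "(u, u) \<notin> P"
proof (cases u)
  case (Inl a)
  show ?thesis
  proof
    assume "(u, u) \<in> P"
    then have "(a, a) \<in> P1" using P_LL Inl by simp
    then show False using so1(1,3,4) by blast
  qed
next
  case (Inr a)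
  show ?thesis
  proof
    assume "(u, u) \<in> P"
    then have "(a, a) \<in> P2" using P_RR Inr by simp
    then show False using so2(1,3,4) by blast
  qed
qed

lemma P_sub_S: "P \<subseteq> S"
  using P_sub_R P_irrefl unfolding S_def by auto

lemma S_X: "S \<subseteq> X \<times> X"
proof
  fix p assume "p \<in> S"
  then obtain u v where p: "p = (u, v)" "(u, v) \<in> R\<^sup>*" "u \<noteq> v" unfolding S_def by (cases p) auto
  then have "(u, v) \<in> R\<^sup>+" by (simp add: rtrancl_eq_or_trancl)
  then show "p \<in> X \<times> X" using trancl_subset_Sigma[OF R_X] p(1) by blast
qed

lemma so: "so_structure X P S"
  unfolding so_structure_def
proof (intro conjI ballI impI)
  show "P \<subseteq> X \<times> X" using P_sub_S S_X by blast
  show "S \<subseteq> X \<times> X" using S_X .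
  show "(a, a) \<notin> S" for a unfolding S_def by simp
  show "(a, b) \<in> S" if "(a, b) \<in> P" for a b using that P_sub_S by blast
  show "(a, c) \<in> S" if "(a, b) \<in> S \<and> (b, c) \<in> S \<and> a \<noteq> c" for a b c
    using that unfolding S_def by (auto intro: rtrancl_trans)
  show "(a, c) \<in> P" if "(a, b) \<in> S \<and> (b, c) \<in> P \<or> (a, b) \<in> P \<and> (b, c) \<in> S" for a b c
    using that
  proof
    assume h: "(a, b) \<in> S \<and> (b, c) \<in> P"
    then obtain w w' where ww: "(b, w) \<in> R\<^sup>*" "(w, w') \<in> P12" "(w', c) \<in> R\<^sup>*" unfolding P_def by blast
    have "(a, b) \<in> R\<^sup>*" using h unfolding S_def by auto
    then have "(a, w) \<in> R\<^sup>*" using ww(1) by (rule rtrancl_trans)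
    then show ?thesis using ww unfolding P_def by blast
  next
    assume h: "(a, b) \<in> P \<and> (b, c) \<in> S"
    then obtain w w' where ww: "(a, w) \<in> R\<^sup>*" "(w, w') \<in> P12" "(w', b) \<in> R\<^sup>*" unfolding P_def by blast
    have "(b, c) \<in> R\<^sup>*" using h unfolding S_def by auto
    with ww(3) have "(w', c) \<in> R\<^sup>*" by (rule rtrancl_trans)
    then show ?thesis using ww unfolding P_def by blast
  qed
qed

abbreviation "C \<equiv> sq_cls X S"
abbreviation "C1 \<equiv> sq_cls X1 S1"
abbreviation "C2 \<equiv> sq_cls X2 S2"

lemma cls_L: "a \<in> X1 \<Longrightarrow> C (Inl a) = Inl ` C1 a"
  unfolding sq_cls_def sq_eqv_def X_def
  by (auto simp: S_LL S_RL)

lemma cls_R: "a \<in> X2 \<Longrightarrow> C (Inr a) = Inr ` C2 a"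
  unfolding sq_cls_def sq_eqv_def X_def
  by (auto simp: S_RR S_RL)


lemma hat_LL:
  assumes "a \<in> X1" "b \<in> X1" "\<And>x y. (Inl x, Inl y) \<in> Qr \<longleftrightarrow> (x, y) \<in> Qr1"
  shows "(C (Inl a), C (Inl b)) \<in> hat X S Qr \<longleftrightarrow> (C1 a, C1 b) \<in> hat X1 S1 Qr1"
proof -
  have X: "Inl a \<in> X" "Inl b \<in> X" using assms unfolding X_def by auto
  show ?thesis
    apply (subst hat_iff[OF X])
    apply (subst hat_iff[OF assms(1,2)])
    unfolding cls_L[OF assms(1)] cls_L[OF assms(2)]
    using assms(3) by (auto simp: inj_image_eq_iff)
qed

lemma hat_RR:
  assumes "a \<in> X2" "b \<in> X2" "\<And>x y. (Inr x, Inr y) \<in> Qr \<longleftrightarrow> (x, y) \<in> Qr2"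
  shows "(C (Inr a), C (Inr b)) \<in> hat X S Qr \<longleftrightarrow> (C2 a, C2 b) \<in> hat X2 S2 Qr2"
proof -
  have X: "Inr a \<in> X" "Inr b \<in> X" using assms unfolding X_def by auto
  show ?thesis
    apply (subst hat_iff[OF X])
    apply (subst hat_iff[OF assms(1,2)])
    unfolding cls_R[OF assms(1)] cls_R[OF assms(2)]
    using assms(3) by (auto simp: inj_image_eq_iff)
qed

lemma cov_LL:
  assumes "a \<in> X1" "b \<in> X1" "(C (Inl a), C (Inl b)) \<in> cov (hat X S S)"
  shows "(C1 a, C1 b) \<in> cov (hat X1 S1 S1)"
proof -
  have h: "(C (Inl a), C (Inl b)) \<in> hat X S S" "\<not> (\<exists>z. (C (Inl a), z) \<in> hat X S S \<and> (z, C (Inl b)) \<in> hat X S S)"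
    using assms(3) unfolding cov_def by auto
  have "(C1 a, C1 b) \<in> hat X1 S1 S1" using h(1) hat_LL[OF assms(1,2), of S S1] S_LL by simp
  moreover have "\<not> (\<exists>z. (C1 a, z) \<in> hat X1 S1 S1 \<and> (z, C1 b) \<in> hat X1 S1 S1)"
  proof
    assume "\<exists>z. (C1 a, z) \<in> hat X1 S1 S1 \<and> (z, C1 b) \<in> hat X1 S1 S1"
    then obtain z where z: "(C1 a, z) \<in> hat X1 S1 S1" "(z, C1 b) \<in> hat X1 S1 S1" by blast
    then obtain c where c: "c \<in> X1" "z = C1 c" using hat_dom1 by metis
    have "(C (Inl a), C (Inl c)) \<in> hat X S S" using z(1) c hat_LL[OF assms(1) c(1), of S S1] S_LL by simp
    moreover have "(C (Inl c), C (Inl b)) \<in> hat X S S" using z(2) c hat_LL[OF c(1) assms(2), of S S1] S_LL by simp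
    ultimately show False using h(2) by blast
  qed
  ultimately show ?thesis unfolding cov_def by auto
qed

lemma cov_RR:
  assumes "a \<in> X2" "b \<in> X2" "(C (Inr a), C (Inr b)) \<in> cov (hat X S S)"
  shows "(C2 a, C2 b) \<in> cov (hat X2 S2 S2)"
proof -
  have h: "(C (Inr a), C (Inr b)) \<in> hat X S S" "\<not> (\<exists>z. (C (Inr a), z) \<in> hat X S S \<and> (z, C (Inr b)) \<in> hat X S S)"
    using assms(3) unfolding cov_def by auto
  have "(C2 a, C2 b) \<in> hat X2 S2 S2" using h(1) hat_RR[OF assms(1,2), of S S2] S_RR by simp
  moreover have "\<not> (\<exists>z. (C2 a, z) \<in> hat X2 S2 S2 \<and> (z, C2 b) \<in> hat X2 S2 S2)"
  proof
    assume "\<exists>z. (C2 a, z) \<in> hat X2 S2 S2 \<and> (z, C2 b) \<in> hat X2 S2 S2"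
    then obtain z where z: "(C2 a, z) \<in> hat X2 S2 S2" "(z, C2 b) \<in> hat X2 S2 S2" by blast
    then obtain c where c: "c \<in> X2" "z = C2 c" using hat_dom1 by metis
    have "(C (Inr a), C (Inr c)) \<in> hat X S S" using z(1) c hat_RR[OF assms(1) c(1), of S S2] S_RR by simp
    moreover have "(C (Inr c), C (Inr b)) \<in> hat X S S" using z(2) c hat_RR[OF c(1) assms(2), of S S2] S_RR by simp
    ultimately show False using h(2) by blast
  qed
  ultimately show ?thesis unfolding cov_def by auto
qed

lemma lam_L: "lam ` Inl ` A = l1 ` A" unfolding lam_def by (auto simp: image_image)
lemma lam_R: "lam ` Inr ` A = l2 ` A" unfolding lam_def by (auto simp: image_image)

lemma onpath:
  assumes "a \<in> X" "b \<in> X" "(C a, C b) \<in> cov (hat X S S)" "x \<in> C a" "y \<in> C b"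
    "(x, z) \<in> R\<^sup>*" "(z, y) \<in> R\<^sup>*"
  shows "z \<in> C a \<union> C b"
proof (rule ccontr)
  assume nz: "z \<notin> C a \<union> C b"
  have "x \<noteq> z" using nz assms(4) by auto
  then have xz: "(x, z) \<in> S" using assms(6) unfolding S_def by auto
  have "z \<noteq> y" using nz assms(5) by auto
  then have zy: "(z, y) \<in> S" using assms(7) unfolding S_def by auto
  have zX: "z \<in> X" using xz S_X by auto
  have zz: "z \<in> C z" using cls_self[OF zX] .
  have "(C a, C z) \<in> hat X S S" unfolding hat_iff[OF assms(1) zX] using nz zz assms(4) xz by blast
  moreover have "(C z, C b) \<in> hat X S S" unfolding hat_iff[OF zX assms(2)] using nz zz assms(5) zy by blast
  ultimately show False using assms(3) unfolding cov_def by auto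
qed


lemma X_L: "Inl a \<in> X \<longleftrightarrow> a \<in> X1" unfolding X_def by auto
lemma X_R: "Inr a \<in> X \<longleftrightarrow> a \<in> X2" unfolding X_def by auto

lemma no_RL:
  assumes "a \<in> X2" "b \<in> X1" "(C (Inr a), C (Inl b)) \<in> hat X S S"
  shows False
proof -
  have X: "Inr a \<in> X" "Inl b \<in> X" using assms(1,2) X_L X_R by auto
  obtain x y where "x \<in> C (Inr a)" "y \<in> C (Inl b)" "(x, y) \<in> S"
    using assms(3) unfolding hat_iff[OF X] by blast
  then show False unfolding cls_R[OF assms(1)] cls_L[OF assms(2)] using S_RL by auto
qed

lemma cross_LC1:
  assumes a': "a' \<in> X1" and b': "b' \<in> X2"
    and cv: "(C (Inl a'), C (Inr b')) \<in> cov (hat X S S)"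
    and hp: "(C (Inl a'), C (Inr b')) \<in> hat X S P"
  shows "\<not> (lam ` C (Inl a') \<times> lam ` C (Inr b') \<subseteq> ser)"
proof -
  have X: "Inl a' \<in> X" "Inr b' \<in> X" using a' b' X_L X_R by auto
  obtain x y where xy: "x \<in> C (Inl a')" "y \<in> C (Inr b')" "(x, y) \<in> P"
    using hp unfolding hat_iff[OF X] by blast
  then obtain w w' where w: "(x, w) \<in> R\<^sup>*" "(w, w') \<in> P12" "(w', y) \<in> R\<^sup>*"
    unfolding P_def by blast
  have ww': "(w, w') \<in> R\<^sup>*" using w(2) unfolding R_def by auto
  have "w \<in> C (Inl a') \<union> C (Inr b')"
    using onpath[OF X cv xy(1,2) w(1)] ww' w(3) by (meson rtrancl_trans)
  moreover have "w' \<in> C (Inl a') \<union> C (Inr b')"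
    using onpath[OF X cv xy(1,2) _ w(3)] ww' w(1) by (meson rtrancl_trans)
  moreover have wP: "(w, w') \<in> P" using w(2) P12_sub_P by auto
  ultimately consider "w \<in> C (Inl a')" "w' \<in> C (Inr b')"
    | "w \<in> C (Inl a')" "w' \<in> C (Inl a')" | "w \<in> C (Inr b')" "w' \<in> C (Inr b')"
    | "w \<in> C (Inr b')" "w' \<in> C (Inl a')" by blast
  then show ?thesis
  proof cases
    case 1
    then obtain p q where pq: "w = Inl p" "w' = Inr q"
      unfolding cls_L[OF a'] cls_R[OF b'] by auto
    from w(2) have "(l1 p, l2 q) \<notin> ser"
      by (cases rule: P12_cases) (use pq in auto)
    then have "(lam w, lam w') \<notin> ser" using pq unfolding lam_def by simp
    then show ?thesis using 1 by blast
  next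
    case 2 then show ?thesis using cls_notP[OF so] wP by blast
  next
    case 3 then show ?thesis using cls_notP[OF so] wP by blast
  next
    case 4
    then obtain p q where pq: "w = Inr p" "w' = Inl q"
      unfolding cls_L[OF a'] cls_R[OF b'] by auto
    from w(2) show ?thesis
      by (cases rule: P12_cases) (use pq in auto)
  qed
qed

lemma cross_LC2:
  assumes a': "a' \<in> X1" and b': "b' \<in> X2"
    and cv: "(C (Inl a'), C (Inr b')) \<in> cov (hat X S S)"
    and hp: "(C (Inl a'), C (Inr b')) \<notin> hat X S P"
  shows "\<not> (lam ` C (Inr b') \<times> lam ` C (Inl a') \<subseteq> ser)"
proof -
  have X: "Inl a' \<in> X" "Inr b' \<in> X" using a' b' X_L X_R by auto
  have hs: "(C (Inl a'), C (Inr b')) \<in> hat X S S" using cv unfolding cov_def by auto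
  then have ne: "C (Inl a') \<noteq> C (Inr b')" unfolding hat_iff[OF X] by blast
  obtain x y where xy: "x \<in> C (Inl a')" "y \<in> C (Inr b')" "(x, y) \<in> S"
    using hs unfolding hat_iff[OF X] by blast
  have xyR: "(x, y) \<in> R\<^sup>*" using xy(3) unfolding S_def by auto
  have yA: "y \<notin> C (Inl a')" using xy(2) unfolding cls_L[OF a'] cls_R[OF b'] by auto
  obtain u v where uv: "u \<in> C (Inl a')" "v \<in> C (Inr b')" "(u, v) \<in> R"
    using path_cross[OF xyR xy(1) yA, of "C (Inr b')"] onpath[OF X cv xy(1,2)] by blast
  obtain p q where pq: "u = Inl p" "v = Inr q"
    using uv(1,2) unfolding cls_L[OF a'] cls_R[OF b'] by auto
  have "(u, v) \<notin> P12"
  proof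
    assume "(u, v) \<in> P12"
    then have "(u, v) \<in> P" using P12_sub_P by auto
    then have "(C (Inl a'), C (Inr b')) \<in> hat X S P" unfolding hat_iff[OF X] using ne uv by blast
    then show False using hp by simp
  qed
  then have "(u, v) \<in> S12" using uv(3) unfolding R_def by auto
  then have "(l2 q, l1 p) \<notin> ser" using pq unfolding S12_def by auto
  then have "(lam v, lam u) \<notin> ser" using pq unfolding lam_def by simp
  then show ?thesis using uv by blast
qed


lemma LC1:
  assumes "a \<in> X" "b \<in> X" "a \<noteq> b" "(C a, C b) \<in> cov (hat X S S) \<inter> hat X S P"
  shows "\<not> (lam ` C a \<times> lam ` C b \<subseteq> ser)"
proof (cases a)
  case (Inl a')
  have a': "a' \<in> X1" using assms(1) Inl X_L by simp
  show ?thesis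
  proof (cases b)
    case (Inl b')
    have b': "b' \<in> X1" using assms(2) Inl X_L by simp
    have "(C1 a', C1 b') \<in> cov (hat X1 S1 S1)" using cov_LL[OF a' b'] assms(4) Inl \<open>a = Inl a'\<close> by simp
    moreover have "(C1 a', C1 b') \<in> hat X1 S1 P1" using hat_LL[OF a' b', of P P1] P_LL assms(4) Inl \<open>a = Inl a'\<close> by simp
    moreover have "a' \<noteq> b'" using assms(3) Inl \<open>a = Inl a'\<close> by simp
    ultimately have "\<not> (l1 ` C1 a' \<times> l1 ` C1 b' \<subseteq> ser)" using T1D(4) a' b' by blast
    then show ?thesis using Inl \<open>a = Inl a'\<close> cls_L[OF a'] cls_L[OF b'] lam_L by simp
  next
    case (Inr b')
    have b': "b' \<in> X2" using assms(2) Inr X_R by simp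
    show ?thesis using cross_LC1[OF a' b'] assms(4) Inr \<open>a = Inl a'\<close> by simp
  qed
next
  case (Inr a')
  have a': "a' \<in> X2" using assms(1) Inr X_R by simp
  show ?thesis
  proof (cases b)
    case (Inl b')
    have b': "b' \<in> X1" using assms(2) Inl X_L by simp
    have "(C a, C b) \<in> hat X S S" using assms(4) unfolding cov_def by auto
    then show ?thesis using no_RL[OF a' b'] Inl \<open>a = Inr a'\<close> by simp
  next
    case (Inr b')
    have b': "b' \<in> X2" using assms(2) Inr X_R by simp
    have "(C2 a', C2 b') \<in> cov (hat X2 S2 S2)" using cov_RR[OF a' b'] assms(4) Inr \<open>a = Inr a'\<close> by simp
    moreover have "(C2 a', C2 b') \<in> hat X2 S2 P2" using hat_RR[OF a' b', of P P2] P_RR assms(4) Inr \<open>a = Inr a'\<close> by simp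
    moreover have "a' \<noteq> b'" using assms(3) Inr \<open>a = Inr a'\<close> by simp
    ultimately have "\<not> (l2 ` C2 a' \<times> l2 ` C2 b' \<subseteq> ser)" using T2D(4) a' b' by blast
    then show ?thesis using Inr \<open>a = Inr a'\<close> cls_R[OF a'] cls_R[OF b'] lam_R by simp
  qed
qed

lemma LC2:
  assumes "a \<in> X" "b \<in> X" "a \<noteq> b" "(C a, C b) \<in> cov (hat X S S) - hat X S P"
  shows "\<not> (lam ` C b \<times> lam ` C a \<subseteq> ser)"
proof (cases a)
  case (Inl a')
  have a': "a' \<in> X1" using assms(1) Inl X_L by simp
  show ?thesis
  proof (cases b)
    case (Inl b')
    have b': "b' \<in> X1" using assms(2) Inl X_L by simp
    have "(C1 a', C1 b') \<in> cov (hat X1 S1 S1)" using cov_LL[OF a' b'] assms(4) Inl \<open>a = Inl a'\<close> by simp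
    moreover have "(C1 a', C1 b') \<notin> hat X1 S1 P1" using hat_LL[OF a' b', of P P1] P_LL assms(4) Inl \<open>a = Inl a'\<close> by simp
    moreover have "a' \<noteq> b'" using assms(3) Inl \<open>a = Inl a'\<close> by simp
    ultimately have "\<not> (l1 ` C1 b' \<times> l1 ` C1 a' \<subseteq> ser)" using T1D(5) a' b' by blast
    then show ?thesis using Inl \<open>a = Inl a'\<close> cls_L[OF a'] cls_L[OF b'] lam_L by simp
  next
    case (Inr b')
    have b': "b' \<in> X2" using assms(2) Inr X_R by simp
    show ?thesis using cross_LC2[OF a' b'] assms(4) Inr \<open>a = Inl a'\<close> by simp
  qed
next
  case (Inr a')
  have a': "a' \<in> X2" using assms(1) Inr X_R by simp
  show ?thesis
  proof (cases b)
    case (Inl b')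
    have b': "b' \<in> X1" using assms(2) Inl X_L by simp
    have "(C a, C b) \<in> hat X S S" using assms(4) unfolding cov_def by auto
    then show ?thesis using no_RL[OF a' b'] Inl \<open>a = Inr a'\<close> by simp
  next
    case (Inr b')
    have b': "b' \<in> X2" using assms(2) Inr X_R by simp
    have "(C2 a', C2 b') \<in> cov (hat X2 S2 S2)" using cov_RR[OF a' b'] assms(4) Inr \<open>a = Inr a'\<close> by simp
    moreover have "(C2 a', C2 b') \<notin> hat X2 S2 P2" using hat_RR[OF a' b', of P P2] P_RR assms(4) Inr \<open>a = Inr a'\<close> by simp
    moreover have "a' \<noteq> b'" using assms(3) Inr \<open>a = Inr a'\<close> by simp
    ultimately have "\<not> (l2 ` C2 b' \<times> l2 ` C2 a' \<subseteq> ser)" using T2D(5) a' b' by blast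
    then show ?thesis using Inr \<open>a = Inr a'\<close> cls_R[OF a'] cls_R[OF b'] lam_R by simp
  qed
qed

lemma LC3:
  assumes "a \<in> X" "A \<noteq> {}" "B \<noteq> {}" "A \<subseteq> C a" "B \<subseteq> C a" "A \<union> B = C a"
  shows "\<not> (lam ` A \<times> lam ` B \<subseteq> ser)"
proof (cases a)
  case (Inl a')
  have a': "a' \<in> X1" using assms(1) Inl X_L by simp
  define A' where "A' = Inl -` A"
  define B' where "B' = Inl -` B"
  have cA: "C a = Inl ` C1 a'" using cls_L[OF a'] Inl by simp
  have AA: "A = Inl ` A'" using assms(4) cA unfolding A'_def by auto
  have BB: "B = Inl ` B'" using assms(5) cA unfolding B'_def by auto
  have "A' \<noteq> {}" "B' \<noteq> {}" using assms(2,3) AA BB by auto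
  moreover have "A' \<subseteq> C1 a'" "B' \<subseteq> C1 a'" using assms(4,5) AA BB cA by auto
  moreover have "A' \<union> B' = C1 a'" using assms(6) AA BB cA by (simp add: image_Un[symmetric] inj_image_eq_iff)
  ultimately have "\<not> (l1 ` A' \<times> l1 ` B' \<subseteq> ser)" using T1D(6) a' by blast
  then show ?thesis using AA BB lam_L by simp
next
  case (Inr a')
  have a': "a' \<in> X2" using assms(1) Inr X_R by simp
  define A' where "A' = Inr -` A"
  define B' where "B' = Inr -` B"
  have cA: "C a = Inr ` C2 a'" using cls_R[OF a'] Inr by simp
  have AA: "A = Inr ` A'" using assms(4) cA unfolding A'_def by auto
  have BB: "B = Inr ` B'" using assms(5) cA unfolding B'_def by auto
  have "A' \<noteq> {}" "B' \<noteq> {}" using assms(2,3) AA BB by auto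
  moreover have "A' \<subseteq> C2 a'" "B' \<subseteq> C2 a'" using assms(4,5) AA BB cA by auto
  moreover have "A' \<union> B' = C2 a'" using assms(6) AA BB cA by (simp add: image_Un[symmetric] inj_image_eq_iff)
  ultimately have "\<not> (l2 ` A' \<times> l2 ` B' \<subseteq> ser)" using T2D(6) a' by blast
  then show ?thesis using AA BB lam_R by simp
qed

lemma alphD: "ser \<subseteq> sim" "sym sim"
  using alph unfolding comtrace_alphabet_def by auto

lemma LC4:
  assumes "a \<in> X" "b \<in> X" "a \<noteq> b" "(lam a, lam b) \<notin> ser"
  shows "(a, b) \<in> P \<or> (b, a) \<in> S"
proof (cases a)
  case (Inl a')
  have a': "a' \<in> X1" using assms(1) Inl X_L by simp
  show ?thesis
  proof (cases b)
    case (Inl b')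
    have b': "b' \<in> X1" using assms(2) Inl X_L by simp
    show ?thesis using T1D(7) a' b' assms(3,4) Inl \<open>a = Inl a'\<close> P_LL S_LL by (simp add: lam_def)
  next
    case (Inr b')
    have b': "b' \<in> X2" using assms(2) Inr X_R by simp
    have "(a, b) \<in> P12" using a' b' assms(4) Inr \<open>a = Inl a'\<close> unfolding P12_def lam_def by auto
    then show ?thesis using P12_sub_P by auto
  qed
next
  case (Inr a')
  have a': "a' \<in> X2" using assms(1) Inr X_R by simp
  show ?thesis
  proof (cases b)
    case (Inl b')
    have b': "b' \<in> X1" using assms(2) Inl X_L by simp
    have "(b, a) \<in> S12" using a' b' assms(4) Inl \<open>a = Inr a'\<close> unfolding S12_def lam_def by auto
    then have "(b, a) \<in> R\<^sup>*" unfolding R_def by auto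
    then show ?thesis using assms(3) unfolding S_def by auto
  next
    case (Inr b')
    have b': "b' \<in> X2" using assms(2) Inr X_R by simp
    show ?thesis using T2D(7) a' b' assms(3,4) Inr \<open>a = Inr a'\<close> P_RR S_RR by (simp add: lam_def)
  qed
qed

lemma LC5:
  assumes "a \<in> X" "b \<in> X" "a \<noteq> b" "(lam a, lam b) \<notin> sim"
  shows "(a, b) \<in> P \<or> (b, a) \<in> P"
proof (cases a)
  case (Inl a')
  have a': "a' \<in> X1" using assms(1) Inl X_L by simp
  show ?thesis
  proof (cases b)
    case (Inl b')
    have b': "b' \<in> X1" using assms(2) Inl X_L by simp
    show ?thesis using T1D(8) a' b' assms(3,4) Inl \<open>a = Inl a'\<close> P_LL by (simp add: lam_def)
  next
    case (Inr b')
    have b': "b' \<in> X2" using assms(2) Inr X_R by simp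
    have "(lam a, lam b) \<notin> ser" using assms(4) alphD by auto
    then have "(a, b) \<in> P12" using a' b' Inr \<open>a = Inl a'\<close> unfolding P12_def lam_def by auto
    then show ?thesis using P12_sub_P by auto
  qed
next
  case (Inr a')
  have a': "a' \<in> X2" using assms(1) Inr X_R by simp
  show ?thesis
  proof (cases b)
    case (Inl b')
    have b': "b' \<in> X1" using assms(2) Inl X_L by simp
    have "(lam b, lam a) \<notin> sim" using assms(4) alphD(2) unfolding sym_def by blast
    then have "(lam b, lam a) \<notin> ser" using alphD by auto
    then have "(b, a) \<in> P12" using a' b' Inl \<open>a = Inr a'\<close> unfolding P12_def lam_def by auto
    then show ?thesis using P12_sub_P by auto
  next
    case (Inr b')
    have b': "b' \<in> X2" using assms(2) Inr X_R by simp
    show ?thesis using T2D(8) a' b' assms(3,4) Inr \<open>a = Inr a'\<close> P_RR by (simp add: lam_def)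
  qed
qed

lemma result: "lsos_comtrace E sim ser (X, P, S, lam)"
  unfolding lsos_comtrace_def prod.case
proof (intro conjI)
  show "finite X" using T1D(1) T2D(1) unfolding X_def by simp
  show "so_structure X P S" using so .
  show "lam ` X \<subseteq> E" using T1D(3) T2D(3) unfolding X_def lam_def by auto
  show "\<forall>a\<in>X. \<forall>b\<in>X. a \<noteq> b \<longrightarrow>
          (C a, C b) \<in> cov (hat X S S) \<inter> hat X S P \<longrightarrow> \<not> (lam ` C a \<times> lam ` C b \<subseteq> ser)"
    using LC1 by blast
  show "\<forall>a\<in>X. \<forall>b\<in>X. a \<noteq> b \<longrightarrow>
          (C a, C b) \<in> cov (hat X S S) - hat X S P \<longrightarrow> \<not> (lam ` C b \<times> lam ` C a \<subseteq> ser)"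
    using LC2 by blast
  show "\<forall>a\<in>X. \<forall>A B. A \<noteq> {} \<and> B \<noteq> {} \<and> A \<subseteq> C a \<and> B \<subseteq> C a \<and>
          A \<union> B = C a \<longrightarrow> \<not> (lam ` A \<times> lam ` B \<subseteq> ser)"
    using LC3 by blast
  show "\<forall>a\<in>X. \<forall>b\<in>X. a \<noteq> b \<longrightarrow> (lam a, lam b) \<notin> ser \<longrightarrow> (a, b) \<in> P \<or> (b, a) \<in> S"
    using LC4 by blast
  show "\<forall>a\<in>X. \<forall>b\<in>X. a \<noteq> b \<longrightarrow> (lam a, lam b) \<notin> sim \<longrightarrow> (a, b) \<in> P \<or> (b, a) \<in> P"
    using LC5 by blast
qed

lemma comp_eq:
  "comtrace_comp ser (X1, P1, S1, l1) (X2, P2, S2, l2) = (X, P, S, lam)"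
  unfolding comtrace_comp_def Let_def diamond_def X_def P_def S_def lam_def R_def
    P12_def S12_def by simp

end

theorem mainTheorem13:
  fixes E :: "'e set" and sim ser :: "'e rel"
    and T1 :: "('x, 'e) lsos" and T2 :: "('y, 'e) lsos"
  assumes "comtrace_alphabet E sim ser"
    and "lsos_comtrace E sim ser T1"
    and "lsos_comtrace E sim ser T2"
  shows "lsos_comtrace E sim ser (comtrace_comp ser T1 T2)"
proof -
  obtain X1 P1 S1 l1 where t1: "T1 = (X1, P1, S1, l1)" by (cases T1) auto
  obtain X2 P2 S2 l2 where t2: "T2 = (X2, P2, S2, l2)" by (cases T2) auto
  interpret cc E sim ser X1 P1 S1 l1 X2 P2 S2 l2
    using assms t1 t2 by unfold_locales auto
  show ?thesis unfolding t1 t2 comp_eq using result .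
qed

end
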